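(* Let $\mathcal{X}$ be a finite set, let $p_1,\ldots,p_t$ and $q_1,\ldots,q_l$ be probability distributions on $\mathcal{X}$, and let $0\le \epsilon_{ij}\le 1$ for $i\in[t]$, $j\in[l]$. Then there is a function $f:\mathcal{X}\to[0,1]$ such that (1) for all $i\in[t]$, $\sum_x p_i(x) f(x)\ \ge\ 1-\sum_{j=1}^l \epsilon_{ij}$; (2) for all $j\in[l]$, $\sum_x q_j(x) f(x)\ \le\ \sum_{i=1}^t 2^{-D^{\epsilon_{ij}}_H(p_i\|q_j)}$.
   Context: For probability distributions $p,q$ on a finite set $\Omega$ and $0\le\epsilon\le 1$, the classical hypothesis testing relative entropy is $D^\epsilon_H(p\|q):=\max_{f}\,-\log_2\sum_\omega f(\omega)q(\omega)$, where the maximum is over all functions $f:\Omega\to[0,1]$ with $\sum_\omega f(\omega)p(\omega)\ge 1-\epsilon$. *)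

theory Defs
  imports Complex_Main "HOL-Library.Extended_Real"
begin

definition prob_dist :: "('a::finite \<Rightarrow> real) \<Rightarrow> bool" where
  "prob_dist p \<longleftrightarrow> (\<forall>x. 0 \<le> p x) \<and> (\<Sum>x\<in>UNIV. p x) = 1"

definition test_feasible :: "('a::finite \<Rightarrow> real) \<Rightarrow> real \<Rightarrow> ('a \<Rightarrow> real) \<Rightarrow> bool" where
  "test_feasible p \<epsilon> f \<longleftrightarrow> (\<forall>x. 0 \<le> f x \<and> f x \<le> 1) \<and> (\<Sum>x\<in>UNIV. f x * p x) \<ge> 1 - \<epsilon>"

definition D_H :: "real \<Rightarrow> ('a::finite \<Rightarrow> real) \<Rightarrow> ('a \<Rightarrow> real) \<Rightarrow> ereal" where
  "D_H \<epsilon> p q = (SUP f \<in> {f. test_feasible p \<epsilon> f}.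
      (let s = (\<Sum>x\<in>UNIV. f x * q x) in if s = 0 then \<infinity> else ereal (- log 2 s)))"

definition pow2neg :: "ereal \<Rightarrow> real" where
  "pow2neg d = (case d of ereal r \<Rightarrow> 2 powr (- r) | PInfty \<Rightarrow> 0 | MInfty \<Rightarrow> 0)"

end

theory Submission
  imports Defs "HOL-Analysis.Analysis"
begin

lemma cont_sum: "continuous_on A (\<lambda>f::'a::finite\<Rightarrow>real. \<Sum>x\<in>UNIV. f x * q x)"
  by (intro continuous_intros continuous_on_subset[OF continuous_on_product_coordinates]) auto

lemma opt_exists:
  fixes p q :: "'a::finite \<Rightarrow> real"
  assumes "0 \<le> e"  "prob_dist p"
  shows "\<exists>f. test_feasible p e f \<and> (\<forall>g. test_feasible p e g \<longrightarrow> (\<Sum>x\<in>UNIV. f x * q x) \<le> (\<Sum>x\<in>UNIV. g x * q x))"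
proof -
  define K :: "('a \<Rightarrow> real) set" where "K = PiE UNIV (\<lambda>_. {0..1})"
  have "compactin (product_topology (\<lambda>_. euclidean) UNIV) K"
    unfolding K_def by (subst compactin_PiE) auto
  hence cK: "compact K" by (simp add: euclidean_product_topology compactin_euclidean_iff)
  define C where "C = {f::'a\<Rightarrow>real. 1 - e \<le> (\<Sum>x\<in>UNIV. f x * p x)}"
  have "closed C" unfolding C_def
    by (intro closed_Collect_le continuous_intros cont_sum)
  define S where "S = K \<inter> C"
  have cS: "compact S" unfolding S_def using cK \<open>closed C\<close> by (rule compact_Int_closed)
  have Seq: "S = {f. test_feasible p e f}"
    unfolding S_def K_def C_def test_feasible_def by (auto simp: PiE_def)
  have "(\<lambda>_. 1) \<in> S" unfolding Seq test_feasible_def using assms by (auto simp: prob_dist_def)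
  hence "S \<noteq> {}" by auto
  from continuous_attains_inf[OF cS this cont_sum]
  obtain f where "f \<in> S" "\<forall>g\<in>S. (\<Sum>x\<in>UNIV. f x * q x) \<le> (\<Sum>x\<in>UNIV. g x * q x)" by blast
  thus ?thesis unfolding Seq by auto
qed


lemma opt_bound:
  fixes p q :: "'a::finite \<Rightarrow> real"
  assumes q: "\<forall>x. 0 \<le> q x" and ff: "test_feasible p e f"
    and opt: "\<forall>g. test_feasible p e g \<longrightarrow> (\<Sum>x\<in>UNIV. f x * q x) \<le> (\<Sum>x\<in>UNIV. g x * q x)"
  shows "(\<Sum>x\<in>UNIV. f x * q x) \<le> pow2neg (D_H e p q)"
proof -
  define v where "v = (\<lambda>s::real. if s = 0 then \<infinity> else ereal (- log 2 s))"
  define sf where "sf = (\<Sum>x\<in>UNIV. f x * q x)"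
  have sg0: "0 \<le> (\<Sum>x\<in>UNIV. g x * q x)" if "test_feasible p e g" for g
    using that q unfolding test_feasible_def by (intro sum_nonneg) auto
  have sf0: "0 \<le> sf" using sg0[OF ff] sf_def by simp
  have D: "D_H e p q = v sf"
  proof (rule antisym)
    show "D_H e p q \<le> v sf" unfolding D_H_def
    proof (rule SUP_least)
      fix g assume "g \<in> {f. test_feasible p e f}"
      hence g: "test_feasible p e g" by simp
      have le: "sf \<le> (\<Sum>x\<in>UNIV. g x * q x)" using opt g sf_def by simp
      show "(let s = \<Sum>x\<in>UNIV. g x * q x in if s = 0 then \<infinity> else ereal (- log 2 s)) \<le> v sf"
      proof (cases "sf = 0")
        case True thus ?thesis by (simp add: v_def)
      next
        case False
        hence "0 < sf" using sf0 by simp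
        hence "- log 2 (\<Sum>x\<in>UNIV. g x * q x) \<le> - log 2 sf" using le by simp
        thus ?thesis using False \<open>0 < sf\<close> le by (simp add: v_def Let_def)
      qed
    qed
    show "v sf \<le> D_H e p q" unfolding D_H_def
      using ff by (intro SUP_upper2[of f]) (auto simp: v_def sf_def Let_def)
  qed
  show ?thesis
  proof (cases "sf = 0")
    case True thus ?thesis using D by (simp add: v_def pow2neg_def sf_def)
  next
    case False
    hence "0 < sf" using sf0 by simp
    thus ?thesis using D False by (simp add: v_def pow2neg_def sf_def[symmetric])
  qed
qed

theorem fact1:
  fixes p :: "nat \<Rightarrow> 'a::finite \<Rightarrow> real" and q :: "nat \<Rightarrow> 'a \<Rightarrow> real"
    and t l :: nat and eps :: "nat \<Rightarrow> nat \<Rightarrow> real"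
  assumes "\<forall>i<t. prob_dist (p i)"
    and "\<forall>j<l. prob_dist (q j)"
    and "\<forall>i<t. \<forall>j<l. 0 \<le> eps i j \<and> eps i j \<le> 1"
  shows "\<exists>f :: 'a \<Rightarrow> real. (\<forall>x. 0 \<le> f x \<and> f x \<le> 1)
    \<and> (\<forall>i<t. (\<Sum>x\<in>UNIV. p i x * f x) \<ge> 1 - (\<Sum>j<l. eps i j))
    \<and> (\<forall>j<l. (\<Sum>x\<in>UNIV. q j x * f x) \<le> (\<Sum>i<t. pow2neg (D_H (eps i j) (p i) (q j))))"
proof -
  have "\<forall>i j. \<exists>F. i < t \<longrightarrow> j < l \<longrightarrow> test_feasible (p i) (eps i j) F \<and>
      (\<Sum>x\<in>UNIV. F x * q j x) \<le> pow2neg (D_H (eps i j) (p i) (q j))"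
  proof (intro allI)
    fix i j
    show "\<exists>F. i < t \<longrightarrow> j < l \<longrightarrow> test_feasible (p i) (eps i j) F \<and>
      (\<Sum>x\<in>UNIV. F x * q j x) \<le> pow2neg (D_H (eps i j) (p i) (q j))"
    proof (cases "i < t \<and> j < l")
      case True
      then obtain F where F: "test_feasible (p i) (eps i j) F"
        "\<forall>g. test_feasible (p i) (eps i j) g \<longrightarrow> (\<Sum>x\<in>UNIV. F x * q j x) \<le> (\<Sum>x\<in>UNIV. g x * q j x)"
        using opt_exists[of "eps i j" "p i" "q j"] assms by blast
      have "\<forall>x. 0 \<le> q j x" using assms True by (simp add: prob_dist_def)
      thus ?thesis using opt_bound F by blast
    qed auto
  qed
  then obtain F where F: "\<And>i j. i < t \<Longrightarrow> j < l \<Longrightarrow> test_feasible (p i) (eps i j) (F i j) \<and>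
      (\<Sum>x\<in>UNIV. F i j x * q j x) \<le> pow2neg (D_H (eps i j) (p i) (q j))"
    by metis
  have F01: "0 \<le> F i j x \<and> F i j x \<le> 1" if "i < t" "j < l" for i j x
    using F[OF that] by (simp add: test_feasible_def)
  define M where "M = (\<lambda>j x. Max (insert 0 ((\<lambda>i. F i j x) ` {..<t})))"
  define f where "f = (\<lambda>x. Min (insert 1 ((\<lambda>j. M j x) ` {..<l})))"
  have M0: "0 \<le> M j x" for j x unfolding M_def by simp
  have MF: "F i j x \<le> M j x" if "i < t" for i j x unfolding M_def using that by simp
  have Msum: "M j x \<le> (\<Sum>i<t. F i j x)" if "j < l" for j x
    unfolding M_def
  proof (subst Max_le_iff, simp, simp, intro ballI)
    fix a assume "a \<in> insert 0 ((\<lambda>i. F i j x) ` {..<t})"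
    then show "a \<le> (\<Sum>i<t. F i j x)"
    proof
      assume "a = 0" thus ?thesis using F01 that by (auto intro!: sum_nonneg)
    next
      assume "a \<in> (\<lambda>i. F i j x) ` {..<t}"
      then obtain i where i: "i < t" "a = F i j x" by auto
      show ?thesis unfolding i(2) using i(1) F01 that
        by (intro member_le_sum) auto
    qed
  qed
  have f01: "0 \<le> f x \<and> f x \<le> 1" for x
    unfolding f_def using M0 by (auto simp: Min_le_iff Min_ge_iff)
  have fM: "f x \<le> M j x" if "j < l" for j x unfolding f_def using that by (simp add: Min_le_iff)
  have one_minus: "1 - f x \<le> (\<Sum>j<l. 1 - F i j x)" if "i < t" for i x
  proof -
    have nn: "(\<Sum>j<l. 1 - F i j x) \<ge> 0" using F01 that by (intro sum_nonneg) auto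
    have "f x \<in> insert 1 ((\<lambda>j. M j x) ` {..<l})" unfolding f_def by (intro Min_in) auto
    then show ?thesis
    proof
      assume "f x = 1" thus ?thesis using nn by simp
    next
      assume "f x \<in> (\<lambda>j. M j x) ` {..<l}"
      then obtain j where j: "j < l" "f x = M j x" by auto
      have "1 - f x \<le> 1 - F i j x" using MF[OF that] j by simp
      also have "\<dots> \<le> (\<Sum>j<l. 1 - F i j x)" using j(1) F01 that by (intro member_le_sum) auto
      finally show ?thesis .
    qed
  qed
  show ?thesis
  proof (intro exI conjI allI impI)
    fix x show "0 \<le> f x" "f x \<le> 1" using f01 by auto
  next
    fix i assume i: "i < t"
    have pd: "\<forall>x. 0 \<le> p i x" "(\<Sum>x\<in>UNIV. p i x) = 1" using assms i by (auto simp: prob_dist_def)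
    have "1 - (\<Sum>x\<in>UNIV. p i x * f x) = (\<Sum>x\<in>UNIV. p i x * (1 - f x))"
      using pd by (simp add: algebra_simps sum_subtractf)
    also have "\<dots> \<le> (\<Sum>x\<in>UNIV. p i x * (\<Sum>j<l. 1 - F i j x))"
      using pd one_minus[OF i] by (intro sum_mono mult_left_mono) auto
    also have "\<dots> = (\<Sum>j<l. 1 - (\<Sum>x\<in>UNIV. F i j x * p i x))"
      using pd by (simp add: sum_distrib_left sum.swap[of _ UNIV] algebra_simps sum_subtractf flip: sum_distrib_left)
    also have "\<dots> \<le> (\<Sum>j<l. eps i j)"
    proof (intro sum_mono)
      fix j assume "j \<in> {..<l}"
      thus "1 - (\<Sum>x\<in>UNIV. F i j x * p i x) \<le> eps i j" using F[OF i, of j] by (simp add: test_feasible_def)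
    qed
    finally show "1 - (\<Sum>j<l. eps i j) \<le> (\<Sum>x\<in>UNIV. p i x * f x)" by simp
  next
    fix j assume j: "j < l"
    have qd: "\<forall>x. 0 \<le> q j x" using assms j by (auto simp: prob_dist_def)
    have "(\<Sum>x\<in>UNIV. q j x * f x) \<le> (\<Sum>x\<in>UNIV. q j x * (\<Sum>i<t. F i j x))"
      using qd fM[OF j] Msum[OF j] by (intro sum_mono mult_left_mono) (auto intro: order_trans)
    also have "\<dots> = (\<Sum>i<t. (\<Sum>x\<in>UNIV. F i j x * q j x))"
      by (simp add: sum_distrib_left sum.swap[of _ UNIV] algebra_simps)
    also have "\<dots> \<le> (\<Sum>i<t. pow2neg (D_H (eps i j) (p i) (q j)))"
      using F j by (intro sum_mono) auto
    finally show "(\<Sum>x\<in>UNIV. q j x * f x) \<le> (\<Sum>i<t. pow2neg (D_H (eps i j) (p i) (q j)))" .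
  qed
qed

end
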